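(* Let $k$ be a Calder\'on--Zygmund kernel of order $m$ on a closed set $X\subset\mathbb{R}^d$ with constants $C_{CZ},\tau$, $\mu$ a finite measure supported in $X$, and $T$ a bounded operator on $L^2(\mathbb{R}^d;\mu)$ with $Tf(x)=\int k(x,y)f(y)\,d\mu(y)$ for $x\notin\operatorname{supp}f$. Let $\alpha=\frac{\tau}{2(\tau+m)}$. Let $Q,R$ be cubes in $\mathbb{R}^d$ with $\ell(Q)\le\ell(R)$, and $\varphi_Q,\psi_R\in L^2(\mathbb{R}^d;\mu)$ with $\varphi_Q=0$ outside $Q$, $\psi_R=0$ outside $R$, $\int\varphi_Q\,d\mu=0$, and $\operatorname{dist}(Q,\operatorname{supp}\psi_R)\ge\ell(Q)^\alpha\ell(R)^{1-\alpha}$. Then $$\Big|\int\varphi_Q\,T\psi_R\,d\mu\Big|\le C\frac{\ell(Q)^{\tau/2}\ell(R)^{\tau/2}}{D(Q,R)^{m+\tau}}\sqrt{\mu(Q)}\sqrt{\mu(R)}\,\|\varphi_Q\|_{L^2(\mu)}\|\psi_R\|_{L^2(\mu)},$$ where $D(Q,R)=\ell(Q)+\ell(R)+\operatorname{dist}(Q,R)$ and $C$ depends only on $C_{CZ},\tau,m,d$.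
   Context: A Calder\'on--Zygmund kernel of order $m$ on $X$ with constants $C_{CZ},\tau\in(0,1]$: $|k(x,y)|\le C_{CZ}|x-y|^{-m}$ and $|k(y,x)-k(y,x')|+|k(x,y)-k(x',y)|\le C_{CZ}|x-x'|^\tau/|x-y|^{m+\tau}$ for $x,x',y\in X$ with $|x-x'|\le\frac12|x-y|$. $\ell(\cdot)$ is side length. The cubes $Q$ and $R$ themselves may intersect. *)

theory Defs
  imports "HOL-Analysis.Analysis"
begin

definition CZ_kernel :: "'a::euclidean_space set \<Rightarrow> real \<Rightarrow> real \<Rightarrow> real \<Rightarrow> ('a \<Rightarrow> 'a \<Rightarrow> real) \<Rightarrow> bool" where
  "CZ_kernel X m CCZ \<tau> k \<longleftrightarrow>
     (\<forall>x\<in>X. \<forall>y\<in>X. x \<noteq> y \<longrightarrow> \<bar>k x y\<bar> \<le> CCZ * dist x y powr (-m)) \<and>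
     (\<forall>x\<in>X. \<forall>x'\<in>X. \<forall>y\<in>X. x \<noteq> y \<longrightarrow> dist x x' \<le> dist x y / 2 \<longrightarrow>
        \<bar>k y x - k y x'\<bar> + \<bar>k x y - k x' y\<bar> \<le> CCZ * dist x x' powr \<tau> / dist x y powr (m + \<tau>))"

definition L2 :: "'a measure \<Rightarrow> ('a \<Rightarrow> real) \<Rightarrow> bool" where
  "L2 M f \<longleftrightarrow> f \<in> borel_measurable M \<and> integrable M (\<lambda>x. (f x)\<^sup>2)"

definition L2norm :: "'a measure \<Rightarrow> ('a \<Rightarrow> real) \<Rightarrow> real" where
  "L2norm M f = sqrt (\<integral>x. (f x)\<^sup>2 \<partial>M)"

definition bounded_L2_op :: "'a measure \<Rightarrow> (('a \<Rightarrow> real) \<Rightarrow> ('a \<Rightarrow> real)) \<Rightarrow> bool" where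
  "bounded_L2_op M T \<longleftrightarrow>
     (\<forall>f. L2 M f \<longrightarrow> L2 M (T f)) \<and>
     (\<forall>f g. L2 M f \<longrightarrow> L2 M g \<longrightarrow> (AE x in M. T (\<lambda>y. f y + g y) x = T f x + T g x)) \<and>
     (\<forall>c f. L2 M f \<longrightarrow> (AE x in M. T (\<lambda>y. c * f y) x = c * T f x)) \<and>
     (\<exists>B. \<forall>f. L2 M f \<longrightarrow> L2norm M (T f) \<le> B * L2norm M f)"

text \<open>Support of f as an element of L^2(mu): support of the measure f d mu.\<close>
definition ess_supp :: "'a::metric_space measure \<Rightarrow> ('a \<Rightarrow> real) \<Rightarrow> 'a set" where
  "ess_supp M f = {x. \<forall>e>0. \<not> (AE y in M. y \<in> ball x e \<longrightarrow> f y = 0)}"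

definition kernel_rep :: "'a::metric_space measure \<Rightarrow> ('a \<Rightarrow> 'a \<Rightarrow> real) \<Rightarrow> (('a \<Rightarrow> real) \<Rightarrow> ('a \<Rightarrow> real)) \<Rightarrow> bool" where
  "kernel_rep M k T \<longleftrightarrow>
     (\<forall>f. L2 M f \<longrightarrow> (AE x in M. x \<notin> ess_supp M f \<longrightarrow> T f x = (\<integral>y. k x y * f y \<partial>M)))"

text \<open>Q is a (Borel) axis-parallel cube of side length l > 0; any choice of faces
  between the open and the closed cube is allowed.\<close>
definition is_cube :: "'a::euclidean_space set \<Rightarrow> real \<Rightarrow> bool" where
  "is_cube Q l \<longleftrightarrow> l > 0 \<and> Q \<in> sets borel \<and>
     (\<exists>a. box a (a + l *\<^sub>R One) \<subseteq> Q \<and> Q \<subseteq> cbox a (a + l *\<^sub>R One))"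

end

theory Submission
  imports Defs
begin


lemma delta_pow:
  fixes lQ lR \<tau> m :: real
  assumes "lQ > 0" "lR > 0" "\<tau> > 0" "m > 0"
  shows "(lQ powr (\<tau> / (2 * (\<tau> + m))) * lR powr (1 - \<tau> / (2 * (\<tau> + m)))) powr (m + \<tau>)
     = lQ powr (\<tau>/2) * lR powr (m + \<tau>/2)"
proof -
  have e1: "\<tau> / (2 * (\<tau> + m)) * (m + \<tau>) = \<tau>/2" using assms by (simp add: field_simps)
  have e2: "(1 - \<tau> / (2 * (\<tau> + m))) * (m + \<tau>) = m + \<tau>/2" using assms by (simp add: field_simps)
  show ?thesis using assms
    by (simp only: powr_mult powr_powr e1 e2)
qed

lemma L1:
  fixes lQ lR \<tau> m s \<rho> e dd CCZ :: real
  assumes "lQ > 0" "lQ \<le> lR" "\<tau> > 0" "m > 0" "s \<ge> 0" "dd \<ge> 1" "CCZ > 0"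
    and "\<rho> \<ge> lQ powr (\<tau> / (2 * (\<tau> + m))) * lR powr (1 - \<tau> / (2 * (\<tau> + m)))"
    and "\<rho> \<ge> s" and "0 \<le> e" "e \<le> dd * lQ"
  shows "CCZ * e powr \<tau> / \<rho> powr (m + \<tau>) \<le>
     CCZ * dd powr \<tau> * 3 powr (m+\<tau>) * (lQ powr (\<tau>/2) * lR powr (\<tau>/2) / (lQ + lR + s) powr (m + \<tau>))"
proof -
  define \<delta> where "\<delta> = lQ powr (\<tau> / (2 * (\<tau> + m))) * lR powr (1 - \<tau> / (2 * (\<tau> + m)))"
  define p where "p = m + \<tau>"
  define M where "M = max s lR"
  have lR: "lR > 0" using assms by linarith
  have dpos: "\<delta> > 0" unfolding \<delta>_def using assms lR by simp
  have rpos: "\<rho> > 0" using assms dpos unfolding \<delta>_def by linarith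
  have p: "p > 0" unfolding p_def using assms by simp
  have Mpos: "M > 0" unfolding M_def using lR by simp
  have key: "lQ powr (\<tau>/2) * M powr p \<le> \<rho> powr p * lR powr (\<tau>/2)"
  proof (cases "s \<le> lR")
    case True
    then have "M = lR" unfolding M_def by simp
    have "\<delta> powr p = lQ powr (\<tau>/2) * lR powr (m + \<tau>/2)"
      unfolding \<delta>_def p_def using delta_pow[of lQ lR \<tau> m] assms lR by simp
    moreover have "\<delta> powr p \<le> \<rho> powr p" using dpos assms p unfolding \<delta>_def
      by (intro powr_mono2) (auto simp: \<delta>_def)
    ultimately have "lQ powr (\<tau>/2) * lR powr (m + \<tau>/2) * lR powr (\<tau>/2) \<le> \<rho> powr p * lR powr (\<tau>/2)"
      by (simp add: mult_right_mono)
    moreover have "lR powr (m + \<tau>/2) * lR powr (\<tau>/2) = lR powr p"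
      unfolding p_def by (simp add: powr_add[symmetric] add.commute)
    ultimately show ?thesis using \<open>M = lR\<close> by (simp add: mult.assoc)
  next
    case False
    then have "M = s" unfolding M_def by simp
    have "s powr p \<le> \<rho> powr p" using assms p by (intro powr_mono2) auto
    moreover have "lQ powr (\<tau>/2) \<le> lR powr (\<tau>/2)" using assms by (intro powr_mono2) auto
    ultimately have "lQ powr (\<tau>/2) * s powr p \<le> lR powr (\<tau>/2) * \<rho> powr p"
      by (intro mult_mono) auto
    thus ?thesis using \<open>M = s\<close> by (simp add: mult.commute)
  qed
  have D: "(lQ + lR + s) powr p \<le> 3 powr p * M powr p"
  proof -
    have "lQ + lR + s \<le> 3 * M" unfolding M_def using assms by auto
    then have "(lQ + lR + s) powr p \<le> (3 * M) powr p" using assms p by (intro powr_mono2) auto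
    thus ?thesis using Mpos by (simp add: powr_mult)
  qed
  have Dpos: "(lQ + lR + s) powr p > 0" using assms lR by simp
  have E: "e powr \<tau> \<le> dd powr \<tau> * lQ powr \<tau>"
  proof -
    have "e powr \<tau> \<le> (dd*lQ) powr \<tau>" using assms by (intro powr_mono2) auto
    thus ?thesis using assms by (simp add: powr_mult)
  qed
  have sq: "lQ powr \<tau> = lQ powr (\<tau>/2) * lQ powr (\<tau>/2)" by (simp add: powr_add[symmetric])
  have "e powr \<tau> * (lQ + lR + s) powr p \<le> dd powr \<tau> * lQ powr \<tau> * (3 powr p * M powr p)"
    using E D by (intro mult_mono) auto
  also have "\<dots> = dd powr \<tau> * 3 powr p * lQ powr (\<tau>/2) * (lQ powr (\<tau>/2) * M powr p)"
    using sq by (simp add: algebra_simps)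
  also have "\<dots> \<le> dd powr \<tau> * 3 powr p * lQ powr (\<tau>/2) * (\<rho> powr p * lR powr (\<tau>/2))"
    using key by (intro mult_left_mono) auto
  finally have main: "e powr \<tau> * (lQ + lR + s) powr p \<le> dd powr \<tau> * 3 powr p * lQ powr (\<tau>/2) * lR powr (\<tau>/2) * \<rho> powr p"
    by (simp add: algebra_simps)
  have "CCZ * e powr \<tau> / \<rho> powr p \<le> CCZ * dd powr \<tau> * 3 powr p * (lQ powr (\<tau>/2) * lR powr (\<tau>/2) / (lQ + lR + s) powr p)"
    using main Dpos rpos assms(7) by (simp add: field_simps)
  thus ?thesis unfolding p_def .
qed




lemma L2:
  fixes lQ lR \<tau> m s dd CCZ :: real
  assumes "lQ > 0" "lQ \<le> lR" "\<tau> > 0" "m > 0" "s \<ge> 0" "dd \<ge> 1" "CCZ > 0"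
    and "s \<le> 2*dd*lQ"
    and "lQ powr (\<tau> / (2 * (\<tau> + m))) * lR powr (1 - \<tau> / (2 * (\<tau> + m))) \<le> 2*dd*lQ"
  shows "CCZ * (lQ powr (\<tau> / (2 * (\<tau> + m))) * lR powr (1 - \<tau> / (2 * (\<tau> + m)))) powr (-m) \<le>
     CCZ * (2+2*dd) powr (m+\<tau>) * (2*dd) powr \<tau> * (lQ powr (\<tau>/2) * lR powr (\<tau>/2) / (lQ + lR + s) powr (m + \<tau>))"
proof -
  define \<delta> where "\<delta> = lQ powr (\<tau> / (2 * (\<tau> + m))) * lR powr (1 - \<tau> / (2 * (\<tau> + m)))"
  define p where "p = m + \<tau>"
  have lR: "lR > 0" using assms by linarith
  have dpos: "\<delta> > 0" unfolding \<delta>_def using assms lR by simp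
  have p: "p > 0" unfolding p_def using assms by simp
  have dp: "\<delta> powr p = lQ powr (\<tau>/2) * lR powr (m + \<tau>/2)"
    unfolding \<delta>_def p_def using delta_pow[of lQ lR \<tau> m] assms lR by simp
  have D: "(lQ + lR + s) powr p \<le> (2+2*dd) powr p * lR powr p"
  proof -
    have "lQ + lR + s \<le> (2+2*dd) * lR" proof -
      have "dd*lQ \<le> dd*lR" using assms by (intro mult_left_mono) auto
      thus ?thesis using assms(2,8) by (simp add: algebra_simps)
    qed
    then have "(lQ + lR + s) powr p \<le> ((2+2*dd) * lR) powr p" using assms p by (intro powr_mono2) auto
    thus ?thesis using lR assms by (simp add: powr_mult)
  qed
  have Dpos: "(lQ + lR + s) powr p > 0" using assms lR by simp
  have dt: "\<delta> powr \<tau> \<le> (2*dd) powr \<tau> * lQ powr \<tau>"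
  proof -
    have "\<delta> powr \<tau> \<le> (2*dd*lQ) powr \<tau>" using assms dpos unfolding \<delta>_def by (intro powr_mono2) auto
    thus ?thesis using assms by (simp add: powr_mult)
  qed
  have sq: "lQ powr \<tau> = lQ powr (\<tau>/2) * lQ powr (\<tau>/2)" by (simp add: powr_add[symmetric])
  have e1: "lR powr p * lQ powr (\<tau>/2) = \<delta> powr p * lR powr (\<tau>/2)"
  proof -
    have "lR powr p = lR powr (m + \<tau>/2) * lR powr (\<tau>/2)" unfolding p_def by (simp add: powr_add[symmetric] add.commute)
    thus ?thesis using dp by (simp add: algebra_simps)
  qed
  have e2: "\<delta> powr p = \<delta> powr m * \<delta> powr \<tau>" unfolding p_def by (simp add: powr_add)
  have "lR powr p * lQ powr (\<tau>/2) \<le> \<delta> powr m * ((2*dd) powr \<tau> * lQ powr \<tau>) * lR powr (\<tau>/2)"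
    unfolding e1 e2 using dt by (intro mult_right_mono mult_left_mono) auto
  also have "\<dots> = (\<delta> powr m * (2*dd) powr \<tau> * lQ powr (\<tau>/2) * lR powr (\<tau>/2)) * lQ powr (\<tau>/2)"
    using sq by (simp add: algebra_simps)
  finally have lRp: "lR powr p \<le> \<delta> powr m * (2*dd) powr \<tau> * lQ powr (\<tau>/2) * lR powr (\<tau>/2)"
    using assms by (simp add: mult_ac)
  have "(lQ + lR + s) powr p \<le> (2+2*dd) powr p * (\<delta> powr m * (2*dd) powr \<tau> * lQ powr (\<tau>/2) * lR powr (\<tau>/2))"
    using D lRp by (smt (verit) mult_left_mono powr_ge_zero)
  then have main: "(lQ + lR + s) powr p \<le> \<delta> powr m * ((2+2*dd) powr p * (2*dd) powr \<tau> * lQ powr (\<tau>/2) * lR powr (\<tau>/2))"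
    by (simp add: algebra_simps)
  have inv: "\<delta> powr (-m) = 1 / \<delta> powr m" using dpos by (simp add: powr_minus divide_inverse)
  have "CCZ * \<delta> powr (-m) \<le> CCZ * (2+2*dd) powr p * (2*dd) powr \<tau> * (lQ powr (\<tau>/2) * lR powr (\<tau>/2) / (lQ + lR + s) powr p)"
    unfolding inv using main Dpos dpos assms(7) by (simp add: field_simps)
  thus ?thesis unfolding p_def \<delta>_def .
qed




lemma kernel_cont:
  assumes cz: "CZ_kernel X m CCZ \<tau> k" and S: "S \<subseteq> X" "x \<in> X" "x \<notin> S" and t: "\<tau> > 0"
  shows "continuous_on S (k x)"
  unfolding continuous_on_def
proof
  fix y assume y: "y \<in> S"
  define \<rho> where "\<rho> = dist y x"
  have yx: "y \<noteq> x" using y S by auto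
  have rho: "\<rho> > 0" unfolding \<rho>_def using yx by simp
  have ev: "eventually (\<lambda>z. norm (k x z - k x y) \<le> CCZ * dist z y powr \<tau> / \<rho> powr (m+\<tau>)) (at y within S)"
    unfolding eventually_at
  proof (intro exI[of _ "\<rho>/2"] conjI ballI impI)
    show "\<rho>/2 > 0" using rho by simp
    fix z assume z: "z \<in> S" "z \<noteq> y \<and> dist z y < \<rho>/2"
    have "\<bar>k x y - k x z\<bar> + \<bar>k y x - k z x\<bar> \<le> CCZ * dist y z powr \<tau> / dist y x powr (m + \<tau>)"
    proof -
      have H: "\<forall>x\<in>X. \<forall>x'\<in>X. \<forall>y\<in>X. x \<noteq> y \<longrightarrow> dist x x' \<le> dist x y / 2 \<longrightarrow>
        \<bar>k y x - k y x'\<bar> + \<bar>k x y - k x' y\<bar> \<le> CCZ * dist x x' powr \<tau> / dist x y powr (m + \<tau>)"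
        using cz unfolding CZ_kernel_def by blast
      have yX: "y \<in> X" and zX: "z \<in> X" using y z S by auto
      have "dist y z \<le> dist y x / 2" using z unfolding \<rho>_def by (simp add: dist_commute)
      then show ?thesis using H yX zX S(2) yx by blast
    qed
    then show "norm (k x z - k x y) \<le> CCZ * dist z y powr \<tau> / \<rho> powr (m+\<tau>)"
      unfolding \<rho>_def by (simp add: dist_commute abs_minus_commute)
  qed
  have lim0: "((\<lambda>z. dist z y powr \<tau>) \<longlongrightarrow> 0) (at y within S)"
    by (rule tendsto_zero_powrI) (auto intro!: tendsto_eq_intros t)
  have "((\<lambda>z. CCZ * dist z y powr \<tau> / \<rho> powr (m+\<tau>)) \<longlongrightarrow> 0) (at y within S)"
    using tendsto_divide[OF tendsto_mult[OF tendsto_const lim0] tendsto_const[of "\<rho> powr (m+\<tau>)"]] rho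
    by simp
  then have "((\<lambda>z. k x z - k x y) \<longlongrightarrow> 0) (at y within S)"
    by (rule Lim_null_comparison[OF ev])
  then show "(k x \<longlongrightarrow> k x y) (at y within S)" by (rule LIM_zero_cancel)
qed

definition Kc :: "real \<Rightarrow> real \<Rightarrow> real \<Rightarrow> real \<Rightarrow> real" where
  "Kc CCZ \<tau> m dd = CCZ * (dd powr \<tau> * 3 powr (m+\<tau>) + 2 * (2+2*dd) powr (m+\<tau>) * (2*dd) powr \<tau>)"

lemma kernel_pt:
  fixes lQ lR \<tau> m s dd CCZ :: real
  assumes cz: "CZ_kernel X m CCZ \<tau> k"
    and "lQ > 0" "lQ \<le> lR" "\<tau> > 0" "m > 0" "s \<ge> 0" "dd \<ge> 1" "CCZ > 0"
    and X: "x \<in> X" "x0 \<in> X" "y \<in> X"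
    and d1: "lQ powr (\<tau> / (2 * (\<tau> + m))) * lR powr (1 - \<tau> / (2 * (\<tau> + m))) \<le> dist x y"
    and d2: "lQ powr (\<tau> / (2 * (\<tau> + m))) * lR powr (1 - \<tau> / (2 * (\<tau> + m))) \<le> dist x0 y"
    and sd: "s \<le> dist x y" and xx: "dist x x0 \<le> dd * lQ"
  shows "\<bar>k x y - k x0 y\<bar> \<le> Kc CCZ \<tau> m dd * (lQ powr (\<tau>/2) * lR powr (\<tau>/2) / (lQ + lR + s) powr (m + \<tau>))"
proof -
  define \<delta> where "\<delta> = lQ powr (\<tau> / (2 * (\<tau> + m))) * lR powr (1 - \<tau> / (2 * (\<tau> + m)))"
  define A where "A = lQ powr (\<tau>/2) * lR powr (\<tau>/2) / (lQ + lR + s) powr (m + \<tau>)"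
  have lR: "lR > 0" using assms by linarith
  have dpos: "\<delta> > 0" unfolding \<delta>_def using assms lR by simp
  have A0: "A \<ge> 0" unfolding A_def by simp
  have xy: "x \<noteq> y" using d1 dpos unfolding \<delta>_def by auto
  have x0y: "x0 \<noteq> y" using d2 dpos unfolding \<delta>_def by auto
  have c1: "0 \<le> dd powr \<tau> * 3 powr (m+\<tau>)" by simp
  have c2: "0 \<le> 2 * (2+2*dd) powr (m+\<tau>) * (2*dd) powr \<tau>" by simp
  show ?thesis
  proof (cases "dist x x0 \<le> dist x y / 2")
    case True
    have "\<bar>k y x - k y x0\<bar> + \<bar>k x y - k x0 y\<bar> \<le> CCZ * dist x x0 powr \<tau> / dist x y powr (m + \<tau>)"
      using cz X xy True unfolding CZ_kernel_def by blast
    then have "\<bar>k x y - k x0 y\<bar> \<le> CCZ * dist x x0 powr \<tau> / dist x y powr (m + \<tau>)" by simp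
    also have "\<dots> \<le> CCZ * dd powr \<tau> * 3 powr (m+\<tau>) * A"
      unfolding A_def using L1[of lQ lR \<tau> m s dd CCZ "dist x y" "dist x x0"] assms d1 sd xx by simp
    also have "\<dots> \<le> Kc CCZ \<tau> m dd * A"
      unfolding Kc_def using A0 c2 assms by (simp add: algebra_simps mult_left_mono mult_right_mono)
    finally show ?thesis unfolding A_def .
  next
    case False
    then have lt: "dist x y < 2 * dd * lQ" using xx by simp
    have "\<bar>k x y\<bar> \<le> CCZ * dist x y powr (-m)" using cz X xy unfolding CZ_kernel_def by blast
    also have "\<dots> \<le> CCZ * \<delta> powr (-m)"
      using d1 dpos assms unfolding \<delta>_def by (intro mult_left_mono powr_mono2') auto
    finally have k1: "\<bar>k x y\<bar> \<le> CCZ * \<delta> powr (-m)" .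
    have "\<bar>k x0 y\<bar> \<le> CCZ * dist x0 y powr (-m)" using cz X x0y unfolding CZ_kernel_def by blast
    also have "\<dots> \<le> CCZ * \<delta> powr (-m)"
      using d2 dpos assms unfolding \<delta>_def by (intro mult_left_mono powr_mono2') auto
    finally have k2: "\<bar>k x0 y\<bar> \<le> CCZ * \<delta> powr (-m)" .
    have l2: "CCZ * \<delta> powr (-m) \<le> CCZ * (2+2*dd) powr (m+\<tau>) * (2*dd) powr \<tau> * A"
      unfolding \<delta>_def A_def using L2[of lQ lR \<tau> m s dd CCZ] assms d1 sd lt by simp
    have "\<bar>k x y - k x0 y\<bar> \<le> 2 * (CCZ * (2+2*dd) powr (m+\<tau>) * (2*dd) powr \<tau> * A)"
      using k1 k2 l2 by linarith
    also have "\<dots> \<le> Kc CCZ \<tau> m dd * A"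
      unfolding Kc_def using A0 c1 assms by (simp add: algebra_simps mult_left_mono mult_right_mono)
    finally show ?thesis unfolding A_def .
  qed
qed




lemma L2_integrable:
  assumes "finite_measure M" "L2 M f"
  shows "integrable M f"
proof -
  have "f \<in> borel_measurable M" "integrable M (\<lambda>x. (f x)\<^sup>2)" using assms(2) unfolding L2_def by blast+
  then show ?thesis by (rule finite_measure.square_integrable_imp_integrable[OF assms(1)])
qed

lemma L2_prod_integrable:
  assumes "L2 M f" "L2 M g"
  shows "integrable M (\<lambda>x. f x * g x)"
proof (rule Bochner_Integration.integrable_bound[where f="\<lambda>x. (f x)\<^sup>2 + (g x)\<^sup>2"])
  have f: "f \<in> borel_measurable M" "integrable M (\<lambda>x. (f x)\<^sup>2)" using assms(1) unfolding L2_def by blast+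
  have g: "g \<in> borel_measurable M" "integrable M (\<lambda>x. (g x)\<^sup>2)" using assms(2) unfolding L2_def by blast+
  show "integrable M (\<lambda>x. (f x)\<^sup>2 + (g x)\<^sup>2)" by (rule Bochner_Integration.integrable_add[OF f(2) g(2)])
  show "(\<lambda>x. f x * g x) \<in> borel_measurable M" by (rule borel_measurable_times[OF f(1) g(1)])
  show "AE x in M. norm (f x * g x) \<le> norm ((f x)\<^sup>2 + (g x)\<^sup>2)"
  proof (rule AE_I2)
    fix x
    have "0 \<le> (\<bar>f x\<bar> - \<bar>g x\<bar>)\<^sup>2" by simp
    also have "\<dots> = (f x)\<^sup>2 + (g x)\<^sup>2 - 2 * \<bar>f x\<bar> * \<bar>g x\<bar>"
      by (simp add: power2_diff)
    finally have "2 * \<bar>f x\<bar> * \<bar>g x\<bar> \<le> (f x)\<^sup>2 + (g x)\<^sup>2" by simp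
    then have h: "2 * (\<bar>f x\<bar> * \<bar>g x\<bar>) \<le> (f x)\<^sup>2 + (g x)\<^sup>2" by (simp add: mult.assoc)
    have "0 \<le> \<bar>f x\<bar> * \<bar>g x\<bar>" by simp
    moreover have "norm (f x * g x) = \<bar>f x\<bar> * \<bar>g x\<bar>" by (simp add: abs_mult)
    moreover have "norm ((f x)\<^sup>2 + (g x)\<^sup>2) = (f x)\<^sup>2 + (g x)\<^sup>2" by simp
    ultimately show "norm (f x * g x) \<le> norm ((f x)\<^sup>2 + (g x)\<^sup>2)" using h by linarith
  qed
qed

lemma L1_le_L2:
  assumes fm: "finite_measure M" and f: "L2 M f" and A: "A \<in> sets M"
    and z: "AE x in M. x \<notin> A \<longrightarrow> f x = 0"
  shows "(\<integral>x. \<bar>f x\<bar> \<partial>M) \<le> sqrt (measure M A) * L2norm M f"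
proof -
  have fi: "integrable M f" using L2_integrable[OF fm f] .
  have f2: "integrable M (\<lambda>x. (f x)\<^sup>2)" using f unfolding L2_def by blast
  have Ai: "integrable M (indicator A :: _ \<Rightarrow> real)"
    using A fm by (intro integrable_real_indicator) (use finite_measure.emeasure_finite[of M A] in \<open>auto simp: less_top\<close>)
  define a where "a = measure M A"
  define b where "b = (\<integral>x. (f x)\<^sup>2 \<partial>M)"
  have b0: "b \<ge> 0" unfolding b_def by simp
  have a0: "a \<ge> 0" unfolding a_def by simp
  have ineq: "(\<integral>x. \<bar>f x\<bar> \<partial>M) \<le> (t * b + a / t) / 2" if t: "t > 0" for t
  proof -
    have "(\<integral>x. \<bar>f x\<bar> \<partial>M) \<le> (\<integral>x. (t * (f x)\<^sup>2 + indicator A x / t) / 2 \<partial>M)"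
    proof (rule integral_mono_AE)
      show "integrable M (\<lambda>x. \<bar>f x\<bar>)" using fi by auto
      show "integrable M (\<lambda>x. (t * (f x)\<^sup>2 + indicator A x / t) / 2)" using f2 Ai by auto
      show "AE x in M. \<bar>f x\<bar> \<le> (t * (f x)\<^sup>2 + indicator A x / t) / 2"
        using z
      proof eventually_elim
        case (elim x)
        show ?case
        proof (cases "x \<in> A")
          case True
          have "0 \<le> (t * \<bar>f x\<bar> - 1)\<^sup>2" by simp
          also have "(t * \<bar>f x\<bar> - 1)\<^sup>2 = t * (t * (f x)\<^sup>2 + 1 / t) - 2 * (t * \<bar>f x\<bar>)"
          proof -
            have g: "(t * u - 1)\<^sup>2 = t * (t * u\<^sup>2) + 1 - 2 * (t * u)" for u :: real
              by (simp add: power2_eq_square algebra_simps)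
            have h: "t * (t * (f x)\<^sup>2 + 1 / t) = t * (t * (f x)\<^sup>2) + 1"
              using t by (simp add: distrib_left)
            show ?thesis unfolding h using g[of "\<bar>f x\<bar>"] by simp
          qed
          finally have "t * (2 * \<bar>f x\<bar>) \<le> t * (t * (f x)\<^sup>2 + 1 / t)" by simp
          then have "2 * \<bar>f x\<bar> \<le> t * (f x)\<^sup>2 + 1 / t" using t by simp
          thus ?thesis using True by simp
        next
          case False
          then show ?thesis using elim t by simp
        qed
      qed
    qed
    also have "\<dots> = (t * b + a / t) / 2"
      unfolding a_def b_def using f2 Ai A fm
      by (simp add: finite_measure.emeasure_finite)
    finally show ?thesis .
  qed
  show ?thesis
  proof (cases "a > 0 \<and> b > 0")
    case True
    define t where "t = sqrt a / sqrt b"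
    have t: "t > 0" unfolding t_def using True by simp
    have sb: "b = sqrt b * sqrt b" "a = sqrt a * sqrt a" using True by simp_all
    have "t * b = sqrt a * (b / sqrt b)" unfolding t_def by simp
    also have "b / sqrt b = sqrt b" using True by (simp add: real_div_sqrt)
    finally have "t * b = sqrt a * sqrt b" .
    moreover have "a / t = (a / sqrt a) * sqrt b" unfolding t_def by simp
    moreover have "a / sqrt a = sqrt a" using True by (simp add: real_div_sqrt)
    ultimately have "(t * b + a / t) / 2 = sqrt a * sqrt b" by simp
    thus ?thesis using ineq[OF t] unfolding a_def b_def L2norm_def by simp
  next
    case False
    have "(\<integral>x. \<bar>f x\<bar> \<partial>M) \<le> 0"
    proof (rule field_le_epsilon)
      fix e :: real assume e: "e > 0"
      show "(\<integral>x. \<bar>f x\<bar> \<partial>M) \<le> 0 + e"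
      proof (cases "a = 0")
        case True
        have "(\<integral>x. \<bar>f x\<bar> \<partial>M) \<le> ((e/(b+1)) * b + a / (e/(b+1))) / 2"
          by (rule ineq) (use e b0 in auto)
        also have "\<dots> = (e * (b/(b+1))) / 2" using True by simp
        also have "\<dots> \<le> e"
        proof -
          have "b/(b+1) \<le> 1" using b0 by simp
          then have "e * (b/(b+1)) \<le> e" using e by (intro mult_left_le) auto
          moreover have gen: "\<And>z::real. z \<le> e \<Longrightarrow> z/2 \<le> e" using e by linarith
          ultimately show ?thesis by blast
        qed
        finally show ?thesis by simp
      next
        case False
        then have "b = 0" using \<open>\<not>(a > 0 \<and> b > 0)\<close> a0 b0 by auto
        have "(\<integral>x. \<bar>f x\<bar> \<partial>M) \<le> (((a+1)/e) * b + a / ((a+1)/e)) / 2"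
          by (rule ineq) (use e a0 in auto)
        also have "\<dots> = e * (a/(a+1)) / 2" using \<open>b = 0\<close> e a0 by simp
        also have "\<dots> \<le> e"
        proof -
          have "a/(a+1) \<le> 1" using a0 by simp
          then have "e * (a/(a+1)) \<le> e" using e by (intro mult_left_le) auto
          moreover have gen: "\<And>z::real. z \<le> e \<Longrightarrow> z/2 \<le> e" using e by linarith
          ultimately show ?thesis by blast
        qed
        finally show ?thesis by simp
      qed
    qed
    moreover have "0 \<le> sqrt (measure M A) * L2norm M f" unfolding L2norm_def by simp
    ultimately show ?thesis by linarith
  qed
qed




lemma ess_supp_closed: "closed (ess_supp M f)"
proof -
  have "open (- ess_supp M f)"
  proof (rule openI)
    fix x assume "x \<in> - ess_supp M f"
    then obtain e where e: "e > 0" "AE y in M. y \<in> ball x e \<longrightarrow> f y = 0"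
      unfolding ess_supp_def by auto
    show "\<exists>e>0. ball x e \<subseteq> - ess_supp M f"
    proof (intro exI conjI)
      show "e > 0" by fact
      show "ball x e \<subseteq> - ess_supp M f"
      proof
        fix z assume z: "z \<in> ball x e"
        define r where "r = e - dist x z"
        have r: "r > 0" using z unfolding r_def by auto
        have sub: "ball z r \<subseteq> ball x e"
        proof
          fix w assume "w \<in> ball z r"
          then have "dist z w < r" by simp
          moreover have "dist x w \<le> dist x z + dist z w" by (rule dist_triangle)
          ultimately show "w \<in> ball x e" unfolding r_def by simp
        qed
        have "AE y in M. y \<in> ball z r \<longrightarrow> f y = 0" using e(2)
          by eventually_elim (use sub in blast)
        then show "z \<in> - ess_supp M f" using r unfolding ess_supp_def by auto
      qed
    qed
  qed
  thus ?thesis by (simp add: closed_def)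
qed

lemma ess_supp_AE:
  fixes f :: "'a::euclidean_space \<Rightarrow> real"
  shows "AE y in M. y \<notin> ess_supp M f \<longrightarrow> f y = 0"
proof -
  define F where "F = {ball x e | x e. e > 0 \<and> (AE y in M. y \<in> ball x e \<longrightarrow> f y = 0)}"
  have op: "open S" if "S \<in> F" for S using that unfolding F_def by blast
  obtain F' where F': "F' \<subseteq> F" "countable F'" "\<Union>F' = \<Union>F"
    using Lindelof[of F, OF op] by blast
  have "\<Union>F = - ess_supp M f"
  proof
    show "\<Union>F \<subseteq> - ess_supp M f"
    proof
      fix z assume "z \<in> \<Union>F"
      then obtain x e where xe: "z \<in> ball x e" "e > 0" "AE y in M. y \<in> ball x e \<longrightarrow> f y = 0"
        unfolding F_def by blast
      define r where "r = e - dist x z"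
      have r: "r > 0" using xe unfolding r_def by simp
      have sub: "ball z r \<subseteq> ball x e"
      proof
        fix w assume "w \<in> ball z r"
        then have "dist z w < r" by simp
        moreover have "dist x w \<le> dist x z + dist z w" by (rule dist_triangle)
        ultimately show "w \<in> ball x e" unfolding r_def by simp
      qed
      have "AE y in M. y \<in> ball z r \<longrightarrow> f y = 0" using xe(3)
        by eventually_elim (use sub in blast)
      then show "z \<in> - ess_supp M f" using r unfolding ess_supp_def by blast
    qed
    show "- ess_supp M f \<subseteq> \<Union>F"
    proof
      fix z assume "z \<in> - ess_supp M f"
      then obtain e where "e > 0" "AE y in M. y \<in> ball z e \<longrightarrow> f y = 0"
        unfolding ess_supp_def by blast
      then have "ball z e \<in> F" unfolding F_def by blast
      moreover have "z \<in> ball z e" using \<open>e > 0\<close> by simp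
      ultimately show "z \<in> \<Union>F" by blast
    qed
  qed
  have "AE y in M. \<forall>B\<in>F'. y \<in> B \<longrightarrow> f y = 0"
  proof (rule AE_ball_countable')
    fix B assume "B \<in> F'"
    then have "B \<in> F" using F' by auto
    then show "AE y in M. y \<in> B \<longrightarrow> f y = 0" unfolding F_def by auto
  qed fact
  then show ?thesis
  proof (rule AE_mp, intro AE_I2 impI)
    fix y assume h: "\<forall>B\<in>F'. y \<in> B \<longrightarrow> f y = 0" and "y \<notin> ess_supp M f"
    then have "y \<in> \<Union>F'" using F'(3) \<open>\<Union>F = - ess_supp M f\<close> by auto
    then show "f y = 0" using h by auto
  qed
qed

lemma ess_supp_cong:
  assumes "AE y in M. f y = g y"
  shows "ess_supp M f = ess_supp M g"
proof -
  have "(AE y in M. y \<in> ball x e \<longrightarrow> f y = 0) \<longleftrightarrow> (AE y in M. y \<in> ball x e \<longrightarrow> g y = 0)" for x e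
  proof
    assume "AE y in M. y \<in> ball x e \<longrightarrow> f y = 0"
    with assms show "AE y in M. y \<in> ball x e \<longrightarrow> g y = 0" by eventually_elim auto
  next
    assume "AE y in M. y \<in> ball x e \<longrightarrow> g y = 0"
    with assms show "AE y in M. y \<in> ball x e \<longrightarrow> f y = 0" by eventually_elim auto
  qed
  thus ?thesis unfolding ess_supp_def by simp
qed




lemma cube_diam:
  fixes Q :: "'a::euclidean_space set"
  assumes "is_cube Q l" "x \<in> Q" "z \<in> Q"
  shows "dist x z \<le> real DIM('a) * l"
proof -
  obtain a where a: "Q \<subseteq> cbox a (a + l *\<^sub>R One)" using assms unfolding is_cube_def by auto
  have c: "\<bar>(x - z) \<bullet> b\<bar> \<le> l" if b: "b \<in> Basis" for b
  proof -
    have "a \<bullet> b \<le> x \<bullet> b \<and> x \<bullet> b \<le> a \<bullet> b + l" "a \<bullet> b \<le> z \<bullet> b \<and> z \<bullet> b \<le> a \<bullet> b + l"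
      using a assms b unfolding mem_box by (auto simp: inner_add_left subset_iff mem_box)
    thus ?thesis by (simp add: inner_diff_left abs_le_iff)
  qed
  have "dist x z = norm (x - z)" by (simp add: dist_norm)
  also have "\<dots> \<le> (\<Sum>b\<in>Basis. \<bar>(x - z) \<bullet> b\<bar>)" by (rule norm_le_l1)
  also have "\<dots> \<le> (\<Sum>b\<in>(Basis::'a set). l)" by (intro sum_mono c)
  also have "\<dots> = real DIM('a) * l" by simp
  finally show ?thesis .
qed

lemma main_bound:
  fixes X :: "'a::euclidean_space set" and M :: "'a measure"
    and k :: "'a \<Rightarrow> 'a \<Rightarrow> real" and T :: "('a \<Rightarrow> real) \<Rightarrow> 'a \<Rightarrow> real"
    and Q R :: "'a set" and lQ lR CCZ \<tau> m :: real and \<phi> \<psi> :: "'a \<Rightarrow> real"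
  assumes CCZ: "CCZ > 0" and tau: "0 < \<tau>" and m: "m > 0"
    and Xc: "closed X" and sM: "sets M = sets borel" and fm: "finite_measure M"
    and X0: "emeasure M (UNIV - X) = 0"
    and cz: "CZ_kernel X m CCZ \<tau> k" and bT: "bounded_L2_op M T" and kr: "kernel_rep M k T"
    and cQ: "is_cube Q lQ" and cR: "is_cube R lR" and lQR: "lQ \<le> lR"
    and L2\<phi>: "L2 M \<phi>" and L2\<psi>: "L2 M \<psi>"
    and \<phi>Q: "AE x in M. x \<notin> Q \<longrightarrow> \<phi> x = 0" and \<psi>R: "AE x in M. x \<notin> R \<longrightarrow> \<psi> x = 0"
    and \<phi>0: "(\<integral>x. \<phi> x \<partial>M) = 0"
    and sep: "ess_supp M \<psi> = {} \<or>
        setdist Q (ess_supp M \<psi>) \<ge> lQ powr (\<tau> / (2 * (\<tau> + m))) * lR powr (1 - \<tau> / (2 * (\<tau> + m)))"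
  shows "\<bar>\<integral>x. \<phi> x * T \<psi> x \<partial>M\<bar> \<le>
         Kc CCZ \<tau> m (real DIM('a)) * (lQ powr (\<tau>/2) * lR powr (\<tau>/2) / (lQ + lR + setdist Q R) powr (m + \<tau>))
           * sqrt (measure M Q) * sqrt (measure M R) * L2norm M \<phi> * L2norm M \<psi>"
proof -
  define dd where "dd = real DIM('a)"
  define \<delta> where "\<delta> = lQ powr (\<tau> / (2 * (\<tau> + m))) * lR powr (1 - \<tau> / (2 * (\<tau> + m)))"
  define A where "A = lQ powr (\<tau>/2) * lR powr (\<tau>/2) / (lQ + lR + setdist Q R) powr (m + \<tau>)"
  define K where "K = Kc CCZ \<tau> m dd"
  define E where "E = ess_supp M \<psi>"
  have dd1: "dd \<ge> 1" unfolding dd_def using DIM_positive[where 'a='a] by linarith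
  have K0: "K \<ge> 0" unfolding K_def Kc_def using CCZ by simp
  have A0: "A \<ge> 0" unfolding A_def by simp
  have lQ: "lQ > 0" using cQ unfolding is_cube_def by auto
  have lR: "lR > 0" using lQ lQR by linarith
  have dpos: "\<delta> > 0" unfolding \<delta>_def using lQ lR by simp
  have spM: "space M = UNIV" using sets_eq_imp_space_eq[OF sM] by simp
  have meas_iff: "f \<in> borel_measurable M \<longleftrightarrow> f \<in> borel_measurable borel" for f :: "'a \<Rightarrow> real"
    by (simp only: measurable_cong_sets[OF sM refl])
  have Qs: "Q \<in> sets M" and Rs: "R \<in> sets M" using cQ cR sM unfolding is_cube_def by auto
  have AEX: "AE x in M. x \<in> X"
  proof (rule AE_I')
    show "UNIV - X \<in> null_sets M" using X0 Xc sM by (auto simp: null_sets_def)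
    show "{x \<in> space M. x \<notin> X} \<subseteq> UNIV - X" by auto
  qed
  have distE: "\<delta> \<le> dist x y" if "x \<in> Q" "y \<in> E" for x y
  proof -
    have "E \<noteq> {}" using that by auto
    then have "\<delta> \<le> setdist Q E" using sep unfolding E_def \<delta>_def by auto
    also have "\<dots> \<le> dist x y" using that by (rule setdist_le_dist)
    finally show ?thesis .
  qed
  have QE: "x \<notin> E" if "x \<in> Q" for x using distE[OF that, of x] dpos by auto
  have diam: "dist x z \<le> dd * lQ" if "x \<in> Q" "z \<in> Q" for x z
    unfolding dd_def using cube_diam[OF cQ that] .
  have L2T: "L2 M (T f)" if "L2 M f" for f using bT that unfolding bounded_L2_op_def by auto
  have prodint: "integrable M (\<lambda>x. \<phi> x * T \<psi> x)" by (rule L2_prod_integrable[OF L2\<phi> L2T[OF L2\<psi>]])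
  have rhs0: "0 \<le> K * A * sqrt (measure M Q) * sqrt (measure M R) * L2norm M \<phi> * L2norm M \<psi>"
    using K0 A0 unfolding L2norm_def by simp
  show ?thesis
  proof (cases "\<exists>x0. x0 \<in> Q \<inter> X")
    case False
    have "AE x in M. \<phi> x * T \<psi> x = 0"
      using \<phi>Q AEX by eventually_elim (use False in auto)
    then have "(\<integral>x. \<phi> x * T \<psi> x \<partial>M) = (\<integral>x. 0 \<partial>M)"
      using prodint by (intro integral_cong_AE) auto
    then show ?thesis using rhs0 unfolding K_def A_def dd_def by simp
  next
    case True
    then obtain x0 where x0: "x0 \<in> Q" "x0 \<in> X" by auto
    define S where "S = X \<inter> E"
    have Sc: "closed S" unfolding S_def E_def using Xc ess_supp_closed by auto
    have Sb: "S \<in> sets borel" using Sc by auto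
    define \<psi>' where "\<psi>' = (\<lambda>y. indicator S y * \<psi> y)"
    have AE\<psi>: "AE y in M. \<psi>' y = \<psi> y"
      using ess_supp_AE[of M \<psi>] AEX
      by eventually_elim (auto simp: \<psi>'_def S_def E_def indicator_def)
    have \<psi>meas: "\<psi> \<in> borel_measurable M" using L2\<psi> unfolding L2_def by auto
    have \<psi>'meas: "\<psi>' \<in> borel_measurable M"
      unfolding \<psi>'_def using \<psi>meas Sb sM by (intro borel_measurable_times) (auto simp: meas_iff)
    have L2\<psi>': "L2 M \<psi>'"
      unfolding L2_def
    proof
      show "\<psi>' \<in> borel_measurable M" by fact
      show "integrable M (\<lambda>x. (\<psi>' x)\<^sup>2)"
        using L2\<psi> unfolding L2_def
        by (subst integrable_cong_AE[where g="\<lambda>x. (\<psi> x)\<^sup>2"]) (use AE\<psi> \<psi>'meas in auto)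
    qed
    define h where "h = (\<lambda>y. \<psi> y - \<psi>' y)"
    have hmeas: "h \<in> borel_measurable M" unfolding h_def using \<psi>meas \<psi>'meas by auto
    have AEh: "AE y in M. (h y)\<^sup>2 = 0" using AE\<psi> by eventually_elim (auto simp: h_def)
    have L2h: "L2 M h" unfolding L2_def
    proof
      show "h \<in> borel_measurable M" by fact
      show "integrable M (\<lambda>x. (h x)\<^sup>2)"
        by (subst integrable_cong_AE[where g="\<lambda>x. 0"]) (use AEh hmeas in auto)
    qed
    have nh: "L2norm M h = 0"
    proof -
      have "(\<integral>x. (h x)\<^sup>2 \<partial>M) = (\<integral>x. 0 \<partial>M)"
        using AEh hmeas by (intro integral_cong_AE) auto
      thus ?thesis unfolding L2norm_def by simp
    qed
    obtain B where B: "\<And>f. L2 M f \<Longrightarrow> L2norm M (T f) \<le> B * L2norm M f"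
      using bT unfolding bounded_L2_op_def by blast
    have Th0: "AE x in M. T h x = 0"
    proof -
      have "L2norm M (T h) \<le> 0" using B[OF L2h] nh by simp
      then have i0: "(\<integral>x. (T h x)\<^sup>2 \<partial>M) = 0"
        unfolding L2norm_def by (smt (verit) integral_nonneg_AE zero_le_power2 AE_I2 real_sqrt_le_0_iff)
      have "integrable M (\<lambda>x. (T h x)\<^sup>2)" using L2T[OF L2h] unfolding L2_def by auto
      then have "AE x in M. (T h x)\<^sup>2 = 0"
        using i0 integral_nonneg_eq_0_iff_AE[of M "\<lambda>x. (T h x)\<^sup>2"] by auto
      then show ?thesis by eventually_elim simp
    qed
    have lin: "AE x in M. T (\<lambda>y. \<psi>' y + h y) x = T \<psi>' x + T h x"
      using bT L2\<psi>' L2h unfolding bounded_L2_op_def by blast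
    have sumeq: "(\<lambda>y. \<psi>' y + h y) = \<psi>" unfolding h_def by auto
    have TT: "AE x in M. T \<psi> x = T \<psi>' x" using lin Th0 unfolding sumeq by eventually_elim simp
    have E': "ess_supp M \<psi>' = E" unfolding E_def by (rule ess_supp_cong[OF AE\<psi>])
    define I where "I = (\<lambda>x. \<integral>y. k x y * \<psi>' y \<partial>M)"
    have KR0: "AE x in M. x \<notin> ess_supp M \<psi>' \<longrightarrow> T \<psi>' x = (\<integral>y. k x y * \<psi>' y \<partial>M)"
      using kr L2\<psi>' unfolding kernel_rep_def by blast
    have KR: "AE x in M. x \<notin> E \<longrightarrow> T \<psi>' x = I x"
      using KR0 unfolding E' I_def .
    have \<psi>int: "integrable M \<psi>" using L2_integrable[OF fm L2\<psi>] .
    have kint: "integrable M (\<lambda>y. k x y * \<psi>' y)" if x: "x \<in> Q" "x \<in> X" for x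
    proof (rule Bochner_Integration.integrable_bound[where f="\<lambda>y. CCZ * \<delta> powr (-m) * \<psi> y"])
      show "integrable M (\<lambda>y. CCZ * \<delta> powr (-m) * \<psi> y)" using \<psi>int by auto
      have xS: "x \<notin> S" using QE[OF x(1)] unfolding S_def by auto
      have cont: "continuous_on S (k x)" using kernel_cont[OF cz _ x(2) xS tau] unfolding S_def by auto
      have "(\<lambda>y. indicator S y *\<^sub>R k x y) \<in> borel_measurable borel"
        by (rule borel_measurable_continuous_on_indicator[OF Sb cont])
      then have m1: "(\<lambda>y. indicator S y *\<^sub>R k x y) \<in> borel_measurable M" using meas_iff by blast
      have "(\<lambda>y. k x y * \<psi>' y) = (\<lambda>y. (indicator S y *\<^sub>R k x y) * \<psi> y)"
        unfolding \<psi>'_def by (auto simp: indicator_def)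
      then show "(\<lambda>y. k x y * \<psi>' y) \<in> borel_measurable M" using m1 \<psi>meas by simp
      show "AE y in M. norm (k x y * \<psi>' y) \<le> norm (CCZ * \<delta> powr (-m) * \<psi> y)"
      proof (rule AE_I2)
        fix y
        show "norm (k x y * \<psi>' y) \<le> norm (CCZ * \<delta> powr (-m) * \<psi> y)"
        proof (cases "y \<in> S")
          case True
          then have yX: "y \<in> X" "y \<in> E" unfolding S_def by auto
          have dxy: "\<delta> \<le> dist x y" using distE[OF x(1) yX(2)] .
          then have xy: "x \<noteq> y" using dpos by auto
          have "\<bar>k x y\<bar> \<le> CCZ * dist x y powr (-m)" using cz x yX xy unfolding CZ_kernel_def by blast
          also have "\<dots> \<le> CCZ * \<delta> powr (-m)"
            using dxy dpos CCZ m by (intro mult_left_mono powr_mono2') auto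
          finally have "\<bar>k x y\<bar> * \<bar>\<psi> y\<bar> \<le> CCZ * \<delta> powr (-m) * \<bar>\<psi> y\<bar>"
            by (intro mult_right_mono) auto
          then show ?thesis using True CCZ unfolding \<psi>'_def by (simp add: abs_mult)
        next
          case False
          then show ?thesis unfolding \<psi>'_def by simp
        qed
      qed
    qed
    define c where "c = I x0"
    have Ibound: "\<bar>I x - c\<bar> \<le> K * A * (\<integral>y. \<bar>\<psi> y\<bar> \<partial>M)" if x: "x \<in> Q" "x \<in> X" for x
    proof -
      have i1: "integrable M (\<lambda>y. k x y * \<psi>' y)" by (rule kint[OF x])
      have i2: "integrable M (\<lambda>y. k x0 y * \<psi>' y)" by (rule kint[OF x0])
      have "I x - c = (\<integral>y. k x y * \<psi>' y - k x0 y * \<psi>' y \<partial>M)"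
        unfolding c_def I_def using i1 i2 by simp
      then have "\<bar>I x - c\<bar> \<le> (\<integral>y. \<bar>k x y * \<psi>' y - k x0 y * \<psi>' y\<bar> \<partial>M)" by simp
      also have "\<dots> \<le> (\<integral>y. K * A * \<bar>\<psi> y\<bar> \<partial>M)"
      proof (rule integral_mono_AE)
        show "integrable M (\<lambda>y. \<bar>k x y * \<psi>' y - k x0 y * \<psi>' y\<bar>)" using i1 i2 by auto
        show "integrable M (\<lambda>y. K * A * \<bar>\<psi> y\<bar>)" using \<psi>int by auto
        show "AE y in M. \<bar>k x y * \<psi>' y - k x0 y * \<psi>' y\<bar> \<le> K * A * \<bar>\<psi> y\<bar>"
          using \<psi>R
        proof eventually_elim
          case (elim y)
          show ?case
          proof (cases "y \<in> S \<and> \<psi> y \<noteq> 0")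
            case True
            then have yX: "y \<in> X" "y \<in> E" "y \<in> R" using elim unfolding S_def by auto
            have "\<bar>k x y - k x0 y\<bar> \<le> K * A"
              unfolding K_def A_def
            proof (rule kernel_pt[OF cz lQ lQR tau m setdist_pos_le dd1 CCZ x(2) x0(2) yX(1)])
              show "lQ powr (\<tau> / (2 * (\<tau> + m))) * lR powr (1 - \<tau> / (2 * (\<tau> + m))) \<le> dist x y"
                using distE[OF x(1) yX(2)] unfolding \<delta>_def .
              show "lQ powr (\<tau> / (2 * (\<tau> + m))) * lR powr (1 - \<tau> / (2 * (\<tau> + m))) \<le> dist x0 y"
                using distE[OF x0(1) yX(2)] unfolding \<delta>_def .
              show "setdist Q R \<le> dist x y" using x(1) yX(3) by (rule setdist_le_dist)
              show "dist x x0 \<le> dd * lQ" using diam[OF x(1) x0(1)] .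
            qed
            then have "\<bar>k x y - k x0 y\<bar> * \<bar>\<psi> y\<bar> \<le> K * A * \<bar>\<psi> y\<bar>" by (intro mult_right_mono) auto
            then show ?thesis using True unfolding \<psi>'_def
              by (simp add: abs_mult left_diff_distrib[symmetric])
          next
            case False
            then have "\<psi>' y = 0" unfolding \<psi>'_def by auto
            then show ?thesis using K0 A0 by simp
          qed
        qed
      qed
      also have "\<dots> = K * A * (\<integral>y. \<bar>\<psi> y\<bar> \<partial>M)" by simp
      finally show ?thesis .
    qed
    have \<phi>int: "integrable M \<phi>" using L2_integrable[OF fm L2\<phi>] .
    have eq: "(\<integral>x. \<phi> x * T \<psi> x \<partial>M) = (\<integral>x. \<phi> x * T \<psi> x - \<phi> x * c \<partial>M)"
      using prodint \<phi>int \<phi>0 by simp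
    have "\<bar>\<integral>x. \<phi> x * T \<psi> x \<partial>M\<bar> \<le> (\<integral>x. \<bar>\<phi> x * T \<psi> x - \<phi> x * c\<bar> \<partial>M)"
      unfolding eq by simp
    also have "\<dots> \<le> (\<integral>x. \<bar>\<phi> x\<bar> * (K * A * (\<integral>y. \<bar>\<psi> y\<bar> \<partial>M)) \<partial>M)"
    proof (rule integral_mono_AE)
      show "integrable M (\<lambda>x. \<bar>\<phi> x * T \<psi> x - \<phi> x * c\<bar>)" using prodint \<phi>int by auto
      show "integrable M (\<lambda>x. \<bar>\<phi> x\<bar> * (K * A * (\<integral>y. \<bar>\<psi> y\<bar> \<partial>M)))" using \<phi>int by auto
      show "AE x in M. \<bar>\<phi> x * T \<psi> x - \<phi> x * c\<bar> \<le> \<bar>\<phi> x\<bar> * (K * A * (\<integral>y. \<bar>\<psi> y\<bar> \<partial>M))"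
        using \<phi>Q AEX TT KR
      proof eventually_elim
        case (elim x)
        show ?case
        proof (cases "\<phi> x = 0")
          case True then show ?thesis by simp
        next
          case False
          then have xQ: "x \<in> Q" using elim by auto
          then have "T \<psi> x = I x" using elim QE[OF xQ] by auto
          then have "\<bar>T \<psi> x - c\<bar> \<le> K * A * (\<integral>y. \<bar>\<psi> y\<bar> \<partial>M)" using Ibound[OF xQ] elim by auto
          then have "\<bar>\<phi> x\<bar> * \<bar>T \<psi> x - c\<bar> \<le> \<bar>\<phi> x\<bar> * (K * A * (\<integral>y. \<bar>\<psi> y\<bar> \<partial>M))"
            by (intro mult_left_mono) auto
          then show ?thesis by (simp add: abs_mult right_diff_distrib[symmetric])
        qed
      qed
    qed
    also have "\<dots> = (\<integral>x. \<bar>\<phi> x\<bar> \<partial>M) * (K * A * (\<integral>y. \<bar>\<psi> y\<bar> \<partial>M))" by simp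
    also have "\<dots> \<le> (sqrt (measure M Q) * L2norm M \<phi>) * (K * A * (sqrt (measure M R) * L2norm M \<psi>))"
    proof (rule mult_mono)
      show "(\<integral>x. \<bar>\<phi> x\<bar> \<partial>M) \<le> sqrt (measure M Q) * L2norm M \<phi>"
        by (rule L1_le_L2[OF fm L2\<phi> Qs \<phi>Q])
      have "(\<integral>y. \<bar>\<psi> y\<bar> \<partial>M) \<le> sqrt (measure M R) * L2norm M \<psi>"
        by (rule L1_le_L2[OF fm L2\<psi> Rs \<psi>R])
      then show "K * A * (\<integral>y. \<bar>\<psi> y\<bar> \<partial>M) \<le> K * A * (sqrt (measure M R) * L2norm M \<psi>)"
        using K0 A0 by (intro mult_left_mono) auto
      show "0 \<le> sqrt (measure M Q) * L2norm M \<phi>" unfolding L2norm_def by simp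
      show "0 \<le> K * A * (\<integral>y. \<bar>\<psi> y\<bar> \<partial>M)" using K0 A0 by simp
    qed
    also have "\<dots> = K * A * sqrt (measure M Q) * sqrt (measure M R) * L2norm M \<phi> * L2norm M \<psi>"
      by (simp add: mult_ac)
    finally show ?thesis unfolding K_def A_def dd_def .
  qed
qed


theorem lemma20:
  fixes CCZ \<tau> m :: real
  assumes "CCZ > 0" and "0 < \<tau>" and "\<tau> \<le> 1" and "m > 0"
  shows "\<exists>C>0. \<forall>(X::'a::euclidean_space set) M k T Q R lQ lR \<phi> \<psi>.
     closed X \<and> sets M = sets borel \<and> finite_measure M \<and> emeasure M (UNIV - X) = 0 \<and>
     CZ_kernel X m CCZ \<tau> k \<and> bounded_L2_op M T \<and> kernel_rep M k T \<and>
     is_cube Q lQ \<and> is_cube R lR \<and> lQ \<le> lR \<and>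
     L2 M \<phi> \<and> L2 M \<psi> \<and>
     (AE x in M. x \<notin> Q \<longrightarrow> \<phi> x = 0) \<and> (AE x in M. x \<notin> R \<longrightarrow> \<psi> x = 0) \<and>
     (\<integral>x. \<phi> x \<partial>M) = 0 \<and>
     (ess_supp M \<psi> = {} \<or>
        setdist Q (ess_supp M \<psi>) \<ge> lQ powr (\<tau> / (2 * (\<tau> + m))) * lR powr (1 - \<tau> / (2 * (\<tau> + m))))
     \<longrightarrow> \<bar>\<integral>x. \<phi> x * T \<psi> x \<partial>M\<bar> \<le>
         C * (lQ powr (\<tau>/2) * lR powr (\<tau>/2) / (lQ + lR + setdist Q R) powr (m + \<tau>))
           * sqrt (measure M Q) * sqrt (measure M R) * L2norm M \<phi> * L2norm M \<psi>"
proof -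
  define C where "C = Kc CCZ \<tau> m (real DIM('a))"
  have dd1: "real DIM('a) \<ge> 1" using DIM_positive[where 'a='a] by linarith
  have Cpos: "C > 0"
  proof -
    have a: "0 < real DIM('a) powr \<tau> * 3 powr (m+\<tau>)" using dd1 by simp
    have b: "0 \<le> 2 * (2+2*real DIM('a)) powr (m+\<tau>) * (2*real DIM('a)) powr \<tau>" by simp
    show ?thesis unfolding C_def Kc_def
      by (rule mult_pos_pos[OF assms(1) add_pos_nonneg[OF a b]])
  qed
  show ?thesis
    apply (intro exI[of _ C] conjI allI impI)
     apply (rule Cpos)
    apply (elim conjE)
    unfolding C_def
    apply (rule main_bound[OF assms(1,2,4)])
                      apply assumption+
    done
qed

end
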